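(* Let $a,b\in\mathbb{Q}_3$ with $\gamma(a)=1$, $\gamma(b)=0$, and let $x=\sum_{t\ge0}x_t3^t\in\mathbb{Z}_3^*$ be such that $A_k\equiv0\pmod3$ for all $k\in\mathbb{N}$. Then $x$ is a solution of $x^3+ax=b$ if and only if the digits of $x$ satisfy the system of congruences $$x_0^3\equiv b_0\pmod3,\qquad x_0a_0+M_1(x_0)\equiv b_1\pmod3,$$ and for every $j\ge1$, $$x_{j-1}a_j+x_{j-2}a_{j+1}+\dots+x_0a_{2j-1}+S_{2j}^j+M_{2j}(x_0,\dots,x_{j-1})\equiv b_{2j}\pmod3,$$ $$(A_j-x_0x_j)x_j+x_{j-1}a_{j+1}+x_{j-2}a_{j+2}+\dots+x_0a_{2j}+S_{2j+1}^j+M_{2j+1}(x_0,\dots,x_{j-1})\equiv b_{2j+1}\pmod3,$$ where the integers $M$ are defined by $$3M_1(x_0)=x_0^3-b_0,\qquad 3M_2(x_0)=x_0a_0+M_1(x_0)-b_1,$$ $$3M_{2j+1}(x_0,\dots,x_{j-1})=x_{j-1}a_j+\dots+x_0a_{2j-1}+S_{2j}^j+M_{2j}(x_0,\dots,x_{j-1})-b_{2j},$$ $$3M_{2j+2}(x_0,\dots,x_j)=(A_j-x_0x_j)x_j+x_{j-1}a_{j+1}+\dots+x_0a_{2j}+S_{2j+1}^j+M_{2j+1}(x_0,\dots,x_{j-1})-b_{2j+1}.$$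
   Context: Write $a=3^{\gamma(a)}(a_0+a_13+a_23^2+\dots)$, $b=3^{\gamma(b)}(b_0+b_13+b_23^2+\dots)$ in canonical form, with digits $a_j,b_j\in\{0,1,2\}$, $a_0,b_0\ne0$, $\gamma(a),\gamma(b)\in\mathbb{Z}$. $\mathbb{Z}_3^*$ is the set of $3$-adic units; $x\in\mathbb{Z}_3^*$ is written $x=x_0+x_13+x_23^2+\dots$ with $x_j\in\{0,1,2\}$, $x_0\ne0$. Define $A_0=x_0^2+a_0$ and, for $k\ge1$, $A_k=\frac{A_{k-1}}{3}+a_k+R_k$ with $R_k=\sum_{j=0}^kx_jx_{k-j}$. For $j\le k$, $P_k^j(x_0,\dots,x_{j-1})=\sum\frac{6}{m_0!\cdots m_{j-1}!}x_0^{m_0}\cdots x_{j-1}^{m_{j-1}}$, the sum over nonnegative integers $m_0,\dots,m_{j-1}$ with $\sum_{i=0}^{j-1}m_i=3$ and $\sum_{i=1}^{j-1}im_i=k$. For $s$ a positive integer define $$S_j^i=\begin{cases}\frac{P_{j-1}^i}{3}, & j=3s-1,\\ \frac{P_{j-1}^i}{3}+x_{j/3}^3, & j=3s,\\ \frac{P_{j-1}^i-x_{(j-1)/3}^3}{3}, & j=3s+1.\end{cases}$$ *)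

theory Defs
  imports "HOL-Number_Theory.Cong"
begin

text \<open>3-adic numbers are represented by their digit sequences (functions nat \<Rightarrow> int
  with values in {0,1,2}).  For a with gamma(a) = 1 the number is
  a = 3 * (a_0 + a_1 3 + a_2 3^2 + ...); for b with gamma(b) = 0 it is
  b = b_0 + b_1 3 + ...; x in Z_3^* is x = x_0 + x_1 3 + ...\<close>

definition digits3 :: "(nat \<Rightarrow> int) \<Rightarrow> bool" where
  "digits3 d \<longleftrightarrow> (\<forall>t. d t \<in> {0, 1, 2})"

definition trunc3 :: "(nat \<Rightarrow> int) \<Rightarrow> nat \<Rightarrow> int" where
  "trunc3 d N = (\<Sum>t<N. d t * 3 ^ t)"

text \<open>x is a solution of x^3 + a x = b in Z_3, where a = 3 * (sum a_j 3^j) and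
  b = sum b_j 3^j: equality in Z_3 means congruence modulo 3^N for every N.\<close>
definition is_solution :: "(nat \<Rightarrow> int) \<Rightarrow> (nat \<Rightarrow> int) \<Rightarrow> (nat \<Rightarrow> int) \<Rightarrow> bool" where
  "is_solution x a b \<longleftrightarrow>
     (\<forall>N. [trunc3 x N ^ 3 + (3 * trunc3 a N) * trunc3 x N = trunc3 b N] (mod 3 ^ N))"

definition Rk :: "(nat \<Rightarrow> int) \<Rightarrow> nat \<Rightarrow> int" where
  "Rk x k = (\<Sum>j\<le>k. x j * x (k - j))"

text \<open>A_0 = x_0^2 + a_0, A_k = A_{k-1}/3 + a_k + R_k (division is exact under the
  standing hypothesis that all A_k are divisible by 3).\<close>
primrec Aseq :: "(nat \<Rightarrow> int) \<Rightarrow> (nat \<Rightarrow> int) \<Rightarrow> nat \<Rightarrow> int" where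
  "Aseq x a 0 = x 0 ^ 2 + a 0"
| "Aseq x a (Suc k) = Aseq x a k div 3 + a (Suc k) + Rk x (Suc k)"

text \<open>P_k^j(x_0,...,x_{j-1}); the multinomial coefficient 6/(m_0!...m_{j-1}!) is an integer.\<close>
definition Pkj :: "(nat \<Rightarrow> int) \<Rightarrow> nat \<Rightarrow> nat \<Rightarrow> int" where
  "Pkj x k j = (\<Sum>m \<in> {m :: nat \<Rightarrow> nat. (\<forall>i. j \<le> i \<longrightarrow> m i = 0) \<and>
                     (\<Sum>i<j. m i) = 3 \<and> (\<Sum>i<j. i * m i) = k}.
                 (6 div (\<Prod>i<j. fact (m i))) * (\<Prod>i<j. x i ^ m i))"

text \<open>S_j^i, by the residue of j modulo 3 (j = 3s-1, 3s, 3s+1).  The divisions are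
  exact in all instances used in the theorem.\<close>
definition Sji :: "(nat \<Rightarrow> int) \<Rightarrow> nat \<Rightarrow> nat \<Rightarrow> int" where
  "Sji x j i =
     (if j mod 3 = 2 then Pkj x (j - 1) i div 3
      else if j mod 3 = 0 then Pkj x (j - 1) i div 3 + x (j div 3) ^ 3
      else (Pkj x (j - 1) i - x ((j - 1) div 3) ^ 3) div 3)"

text \<open>Left-hand sides of the congruences of index 2j and 2j+1, given the carry m.\<close>
definition Leven :: "(nat \<Rightarrow> int) \<Rightarrow> (nat \<Rightarrow> int) \<Rightarrow> nat \<Rightarrow> int \<Rightarrow> int" where
  "Leven x a j m = (\<Sum>t<j. x (j - 1 - t) * a (j + t)) + Sji x (2 * j) j + m"

definition Lodd :: "(nat \<Rightarrow> int) \<Rightarrow> (nat \<Rightarrow> int) \<Rightarrow> nat \<Rightarrow> int \<Rightarrow> int" where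
  "Lodd x a j m = (Aseq x a j - x 0 * x j) * x j
                  + (\<Sum>t<j. x (j - 1 - t) * a (j + 1 + t)) + Sji x (2 * j + 1) j + m"

text \<open>Mpair j = (M_{2j+1}, M_{2j+2}).  Each M is defined by 3 M = (previous lhs) - b;
  the division is exact whenever the preceding congruences hold.\<close>
primrec Mpair :: "(nat \<Rightarrow> int) \<Rightarrow> (nat \<Rightarrow> int) \<Rightarrow> (nat \<Rightarrow> int) \<Rightarrow> nat \<Rightarrow> int \<times> int" where
  "Mpair x a b 0 =
     (let m1 = (x 0 ^ 3 - b 0) div 3 in (m1, (x 0 * a 0 + m1 - b 1) div 3))"
| "Mpair x a b (Suc n) =
     (let j = Suc n;
          m1 = (Leven x a j (snd (Mpair x a b n)) - b (2 * j)) div 3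
      in (m1, (Lodd x a j m1 - b (2 * j + 1)) div 3))"

definition Mk :: "(nat \<Rightarrow> int) \<Rightarrow> (nat \<Rightarrow> int) \<Rightarrow> (nat \<Rightarrow> int) \<Rightarrow> nat \<Rightarrow> int" where
  "Mk x a b k = (if k = 0 then 0
                 else if odd k then fst (Mpair x a b (k div 2))
                 else snd (Mpair x a b (k div 2 - 1)))"

end

theory Submission
  imports Defs "HOL-Computational_Algebra.Polynomial"
begin


definition px :: "(nat \<Rightarrow> int) \<Rightarrow> nat \<Rightarrow> int poly" where
  "px x j = (\<Sum>i<j. monom (x i) i)"

lemma coeff_px: "coeff (px x j) i = (if i < j then x i else 0)"
  unfolding px_def by (simp add: coeff_sum)

lemma px_Suc: "px x (Suc j) = px x j + monom (x j) j"
  unfolding px_def by simp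

lemma poly_px: "poly (px x j) 3 = trunc3 x j"
  unfolding px_def trunc3_def by (simp add: poly_sum poly_monom)

definition MS :: "nat \<Rightarrow> nat \<Rightarrow> nat \<Rightarrow> (nat \<Rightarrow> nat) set" where
  "MS n k j = {m. (\<forall>i. j \<le> i \<longrightarrow> m i = 0) \<and> (\<Sum>i<j. m i) = n \<and> (\<Sum>i<j. i * m i) = k}"

definition G :: "(nat \<Rightarrow> int) \<Rightarrow> nat \<Rightarrow> nat \<Rightarrow> nat \<Rightarrow> int" where
  "G x n k j = (\<Sum>m\<in>MS n k j. (fact n div (\<Prod>i<j. fact (m i))) * (\<Prod>i<j. x i ^ m i))"

lemma MS_finite: "finite (MS n k j)"
proof -
  have "MS n k j \<subseteq> {f. \<forall>x. (x \<in> {..<j} \<longrightarrow> f x \<in> {..n}) \<and> (x \<notin> {..<j} \<longrightarrow> f x = 0)}"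
  proof
    fix m assume m: "m \<in> MS n k j"
    have "m i \<le> n" if "i < j" for i
    proof -
      have "m i \<le> (\<Sum>i<j. m i)" using that by (intro member_le_sum) auto
      thus ?thesis using m by (simp add: MS_def)
    qed
    thus "m \<in> {f. \<forall>x. (x \<in> {..<j} \<longrightarrow> f x \<in> {..n}) \<and> (x \<notin> {..<j} \<longrightarrow> f x = 0)}"
      using m by (auto simp: MS_def)
  qed
  thus ?thesis by (rule finite_subset) (intro finite_set_of_finite_funs; simp)
qed

lemma prod_fact_dvd:
  fixes m :: "nat \<Rightarrow> nat" and j :: nat
  assumes "\<forall>i. j \<le> i \<longrightarrow> m i = 0" "(\<Sum>i<j. m i) = n"
  shows "(\<Prod>i<j. fact (m i) :: int) dvd fact n"
  using assms
proof (induction j arbitrary: m n)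
  case 0 thus ?case by simp
next
  case (Suc j)
  let ?m = "m(j := 0)"
  have h1: "\<forall>i. j \<le> i \<longrightarrow> ?m i = 0" using Suc.prems by auto
  have s: "(\<Sum>i<j. ?m i) = (\<Sum>i<j. m i)" by (intro sum.cong) auto
  have h2: "(\<Sum>i<j. ?m i) = n - m j" using Suc.prems(2) s by simp
  have p: "(\<Prod>i<j. fact (?m i) :: int) = (\<Prod>i<j. fact (m i))" by (intro prod.cong) auto
  have d1: "(\<Prod>i<j. fact (m i) :: int) dvd fact (n - m j)"
    using Suc.IH[OF h1 h2] p by simp
  have le: "m j \<le> n" using Suc.prems(2) by simp
  have "(fact (m j) * fact (n - m j) :: int) dvd fact n"
  proof -
    have "fact (m j) * fact (n - m j) * (n choose m j) = (fact n :: nat)"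
      using binomial_fact_lemma[OF le] .
    hence "(fact (m j) * fact (n - m j) :: int) * int (n choose m j) = fact n"
      by (metis of_nat_fact of_nat_mult)
    thus ?thesis by (metis dvd_triv_left)
  qed
  moreover have "(\<Prod>i<Suc j. fact (m i) :: int) dvd fact (m j) * fact (n - m j)"
    using d1 by (simp add: mult.commute mult_dvd_mono)
  ultimately show ?case by (meson dvd_trans)
qed

lemma MS_0: "MS n k 0 = (if n = 0 \<and> k = 0 then {\<lambda>_. 0} else {})"
  by (auto simp: MS_def)

lemma coeff_cmm: fixes v :: int and p :: "int poly" shows "coeff (of_nat C * monom v d * p) k = (if k < d then 0 else of_nat C * v * coeff p (k - d))"
proof -
  have "(of_nat C :: int poly) * monom v d = monom (of_nat C * v) d"
    by (simp add: of_nat_poly smult_monom)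
  thus ?thesis by (simp add: coeff_monom_mult)
qed

lemma G_term:
  assumes c: "c \<le> n" and m': "m' \<in> MS (n - c) k' j"
  shows "(fact n div (\<Prod>i<Suc j. fact ((m'(j := c)) i))) * (\<Prod>i<Suc j. x i ^ (m'(j := c)) i)
     = of_nat (n choose c) * x j ^ c * ((fact (n - c) div (\<Prod>i<j. fact (m' i))) * (\<Prod>i<j. x i ^ m' i) :: int)"
proof -
  have p1': "(\<Prod>i<j. fact ((m'(j := c)) i) :: int) = (\<Prod>i<j. fact (m' i))"
    by (intro prod.cong) auto
  have p1: "(\<Prod>i<Suc j. fact ((m'(j := c)) i) :: int) = (\<Prod>i<j. fact (m' i)) * fact c"
    using p1' by (simp add: prod.lessThan_Suc)
  have p2': "(\<Prod>i<j. x i ^ (m'(j := c)) i) = (\<Prod>i<j. x i ^ m' i)"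
    by (intro prod.cong) auto
  have p2: "(\<Prod>i<Suc j. x i ^ (m'(j := c)) i) = (\<Prod>i<j. x i ^ m' i) * x j ^ c"
    using p2' by (simp add: prod.lessThan_Suc)
  have "(\<Prod>i<j. fact (m' i) :: int) dvd fact (n - c)"
    using m' by (intro prod_fact_dvd) (auto simp: MS_def)
  then obtain Q where Q: "fact (n - c) = (\<Prod>i<j. fact (m' i) :: int) * Q" by (auto elim: dvdE)
  have "fact c * fact (n - c) * (n choose c) = (fact n :: nat)"
    using binomial_fact_lemma[OF c] .
  hence F: "(fact n :: int) = fact c * fact (n - c) * of_nat (n choose c)"
    by (metis of_nat_fact of_nat_mult)
  let ?P = "(\<Prod>i<j. fact (m' i) :: int)"
  have P0: "?P \<noteq> 0" by (simp add: prod_zero_iff)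
  have fc0: "(fact c :: int) \<noteq> 0" by simp
  have "(fact n :: int) div (?P * fact c) = of_nat (n choose c) * Q"
    unfolding F Q using P0 fc0 by (simp add: ac_simps)
  moreover have "fact (n - c) div ?P = Q" unfolding Q using P0 by simp
  ultimately show ?thesis unfolding p1 p2 by (simp add: ac_simps)
qed

lemma G_coeff: "G x n k j = coeff (px x j ^ n) k"
proof (induction j arbitrary: n k)
  case 0
  show ?case by (simp add: G_def MS_0 px_def power_0_left)
next
  case (Suc j)
  define S where "S = Sigma {c. c \<le> n \<and> j * c \<le> k} (\<lambda>c. MS (n - c) (k - j * c) j)"
  define f where "f = (\<lambda>m. (fact n div (\<Prod>i<Suc j. fact (m i))) * (\<Prod>i<Suc j. x i ^ m i) :: int)"
  have "G x n k (Suc j) = (\<Sum>m\<in>MS n k (Suc j). f m)" by (simp add: G_def f_def)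
  also have "\<dots> = (\<Sum>p\<in>S. f ((snd p)(j := fst p)))"
  proof (rule sum.reindex_bij_witness[of _ "\<lambda>p. (snd p)(j := fst p)" "\<lambda>m. (m j, m(j := 0))"])
    fix p assume "p \<in> S"
    then obtain c m' where p: "p = (c, m')" and c: "c \<le> n" "j * c \<le> k" and m': "m' \<in> MS (n - c) (k - j * c) j"
      by (auto simp: S_def)
    have mj: "m' j = 0" using m' by (simp add: MS_def)
    show "(((snd p)(j := fst p)) j, ((snd p)(j := fst p))(j := 0)) = p"
      using p mj by (auto simp: fun_eq_iff)
    have s1: "(\<Sum>i<j. (m'(j := c)) i) = (\<Sum>i<j. m' i)" by (intro sum.cong) auto
    have s2: "(\<Sum>i<j. i * (m'(j := c)) i) = (\<Sum>i<j. i * m' i)" by (intro sum.cong) auto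
    show "(snd p)(j := fst p) \<in> MS n k (Suc j)"
      using p c m' s1 s2 by (auto simp: MS_def)
  next
    fix m assume m: "m \<in> MS n k (Suc j)"
    show "(snd (m j, m(j := 0))) (j := fst (m j, m(j := 0))) = m" by auto
    show "f ((snd (m j, m(j := 0))) (j := fst (m j, m(j := 0)))) = f m" by auto
    have s1: "(\<Sum>i<j. (m(j := 0)) i) = (\<Sum>i<j. m i)" by (intro sum.cong) auto
    have s2: "(\<Sum>i<j. i * (m(j := 0)) i) = (\<Sum>i<j. i * m i)" by (intro sum.cong) auto
    show "(m j, m(j := 0)) \<in> S"
      using m s1 s2 by (auto simp: S_def MS_def)
  qed
  also have "\<dots> = (\<Sum>c\<in>{c. c \<le> n \<and> j * c \<le> k}. \<Sum>m'\<in>MS (n - c) (k - j * c) j. f (m'(j := c)))"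
    unfolding S_def by (subst sum.Sigma) (auto simp: MS_finite split_def)
  also have "\<dots> = (\<Sum>c\<in>{c. c \<le> n \<and> j * c \<le> k}. of_nat (n choose c) * x j ^ c * G x (n - c) (k - j * c) j)"
  proof (intro sum.cong refl)
    fix c assume c: "c \<in> {c. c \<le> n \<and> j * c \<le> k}"
    show "(\<Sum>m'\<in>MS (n - c) (k - j * c) j. f (m'(j := c))) = of_nat (n choose c) * x j ^ c * G x (n - c) (k - j * c) j"
      unfolding G_def sum_distrib_left f_def
      by (intro sum.cong refl G_term) (use c in auto)
  qed
  also have "\<dots> = (\<Sum>c\<in>{c. c \<le> n \<and> j * c \<le> k}. of_nat (n choose c) * x j ^ c * coeff (px x j ^ (n - c)) (k - j * c))"
    using Suc.IH by simp
  also have "\<dots> = (\<Sum>c\<le>n. coeff (of_nat (n choose c) * monom (x j) j ^ c * px x j ^ (n - c)) k)"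
  proof -
    have e: "{c. c \<le> n \<and> j * c \<le> k} = {c \<in> {..n}. j * c \<le> k}" by auto
    show ?thesis unfolding e sum.inter_filter[OF finite_atMost]
    proof (intro sum.cong refl)
      fix c assume "c \<in> {..n}"
      have "coeff (of_nat (n choose c) * monom (x j) j ^ c * px x j ^ (n - c)) k
         = (if k < j * c then 0 else of_nat (n choose c) * x j ^ c * coeff (px x j ^ (n - c)) (k - j * c))"
        by (simp only: monom_power coeff_cmm)
      thus "(if j * c \<le> k then of_nat (n choose c) * x j ^ c * coeff (px x j ^ (n - c)) (k - j * c) else 0) =
         coeff (of_nat (n choose c) * monom (x j) j ^ c * px x j ^ (n - c)) k" by auto
    qed
  qed
  also have "\<dots> = coeff (px x (Suc j) ^ n) k"
    unfolding px_Suc by (simp add: add.commute[of "px x j"] binomial_ring coeff_sum)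
  finally show ?case .
qed

lemma Pkj_coeff: "Pkj x k j = coeff (px x j ^ 3) k"
proof -
  have "Pkj x k j = G x 3 k j"
    unfolding Pkj_def G_def MS_def by (simp add: fact_numeral)
  thus ?thesis by (simp add: G_coeff)
qed

lemma cube_pCons:
  fixes c :: int and q :: "int poly"
  shows "(pCons c q)^3 = [:c^3:] + smult 3 (pCons 0 ([:c^2:]*q + pCons 0 ([:c:] * q^2))) + pCons 0 (pCons 0 (pCons 0 (q^3)))"
proof -
  have "poly ((pCons c q)^3) = poly ([:c^3:] + smult 3 (pCons 0 ([:c^2:]*q + pCons 0 ([:c:] * q^2))) + pCons 0 (pCons 0 (pCons 0 (q^3))))"
    by (rule ext) (simp add: algebra_simps power3_eq_cube power2_eq_square)
  thus ?thesis by (simp add: poly_eq_poly_eq_iff)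
qed

lemma cube_coeff_mod3:
  fixes p :: "int poly"
  shows "[coeff (p^3) k = (if 3 dvd k then coeff p (k div 3) ^ 3 else 0)] (mod 3)"
proof (induction p arbitrary: k)
  case 0
  show ?case by (simp add: power3_eq_cube)
next
  case (pCons c q)
  define B where "B = pCons 0 ([:c^2:]*q + pCons 0 ([:c:] * q^2))"
  have cf: "coeff ((pCons c q)^3) k = coeff [:c^3:] k + 3 * coeff B k + coeff (pCons 0 (pCons 0 (pCons 0 (q^3)))) k"
    unfolding cube_pCons B_def coeff_add coeff_smult by (rule refl)
  show ?case
  proof (cases k)
    case 0 thus ?thesis using cf by (simp add: B_def)
  next
    case (Suc k1)
    show ?thesis
    proof (cases k1)
      case 0
      hence "coeff ((pCons c q)^3) k = 3 * coeff B k" using cf Suc by simp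
      thus ?thesis using Suc 0 by (simp add: cong_def)
    next
      case (Suc k2)
      show ?thesis
      proof (cases k2)
        case 0
        hence "coeff ((pCons c q)^3) k = 3 * coeff B k" using cf Suc \<open>k = Suc k1\<close> by simp
        moreover have "\<not> 3 dvd k" using Suc 0 \<open>k = Suc k1\<close> by presburger
        ultimately show ?thesis by (simp add: cong_def)
      next
        case (Suc k3)
        have kk: "k = k3 + 3" using Suc \<open>k1 = Suc k2\<close> \<open>k = Suc k1\<close> by simp
        have c1: "coeff ((pCons c q)^3) k = 3 * coeff B k + coeff (q^3) k3"
          using cf kk by (simp add: numeral_3_eq_3)
        have d: "(3 dvd k) = (3 dvd k3)" using kk by simp
        have e: "k div 3 = Suc (k3 div 3)" using kk by simp
        have "[coeff ((pCons c q)^3) k = coeff (q^3) k3] (mod 3)"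
          unfolding c1 by (simp add: cong_def)
        also have "[coeff (q^3) k3 = (if 3 dvd k3 then coeff q (k3 div 3) ^ 3 else 0)] (mod 3)"
          by (rule pCons.IH)
        finally show ?thesis using d e by (simp split: if_splits)
      qed
    qed
  qed
qed



lemma W_lemma:
  assumes hyp: "\<forall>k. [Aseq x a k = 0] (mod 3)"
  shows "3^k * Aseq x a k = (\<Sum>i\<le>k. 3^i * (Rk x i + a i))"
proof (induction k)
  case 0 show ?case by (simp add: Rk_def power2_eq_square)
next
  case (Suc k)
  have d: "3 * (Aseq x a k div 3) = Aseq x a k"
    using hyp by (simp add: cong_0_iff)
  have "3^Suc k * Aseq x a (Suc k) = 3^k * (3 * (Aseq x a k div 3)) + 3^Suc k * (a (Suc k) + Rk x (Suc k))"
    by (simp add: algebra_simps)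
  also have "\<dots> = (\<Sum>i\<le>Suc k. 3^i * (Rk x i + a i))"
    unfolding d Suc.IH by (simp add: algebra_simps)
  finally show ?case .
qed

lemma Rk_coeff: "k < j \<Longrightarrow> Rk x k = coeff (px x j ^ 2) k"
  unfolding Rk_def power2_eq_square coeff_mult coeff_px
  by (intro sum.cong) auto

lemma poly_sum_lt:
  fixes q :: "int poly"
  assumes "degree q < N"
  shows "poly q z = (\<Sum>n<N. coeff q n * z^n)"
proof -
  have "poly q z = (\<Sum>n\<le>degree q. coeff q n * z^n)" by (rule poly_altdef)
  also have "\<dots> = (\<Sum>n<N. coeff q n * z^n)"
    using assms by (intro sum.mono_neutral_left) (auto simp: coeff_eq_0)
  finally show ?thesis .
qed

lemma degree_px: "degree (px x j) < Suc j"
proof -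
  have "degree (px x j) \<le> j" by (rule degree_le) (auto simp: coeff_px)
  thus ?thesis by simp
qed

lemma sum_shift0:
  fixes f :: "nat \<Rightarrow> int"
  assumes "\<And>n. n < j \<Longrightarrow> f n = 0"
  shows "(\<Sum>n\<le>j + l. f n) = (\<Sum>m\<le>l. f (m + j))"
proof (induction l)
  case 0
  have "(\<Sum>n\<le>j. f n) = (\<Sum>n<j. f n) + f j" by (simp add: lessThan_Suc_atMost[symmetric])
  also have "(\<Sum>n<j. f n) = 0" using assms by simp
  finally show ?case by simp
next
  case (Suc l)
  thus ?case by (simp add: add.commute)
qed

definition cc :: "(nat \<Rightarrow> int) \<Rightarrow> nat \<Rightarrow> int" where
  "cc x k = (if 3 dvd k then x (k div 3) ^ 3 else 0)"

lemma Sji_alt: "jj \<ge> 1 \<Longrightarrow> Sji x jj i = (Pkj x (jj - 1) i - cc x (jj - 1)) div 3 + cc x jj"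
proof -
  assume "jj \<ge> 1"
  have "jj mod 3 = 0 \<or> jj mod 3 = 1 \<or> jj mod 3 = 2" by arith
  moreover
  { assume h: "jj mod 3 = 2"
    hence "\<not> 3 dvd (jj - 1)" "\<not> 3 dvd jj" using \<open>jj \<ge> 1\<close> by presburger+
    hence ?thesis using h by (simp add: Sji_def cc_def) }
  moreover
  { assume h: "jj mod 3 = 0"
    hence "\<not> 3 dvd (jj - 1)" "3 dvd jj" using \<open>jj \<ge> 1\<close> by presburger+
    hence ?thesis using h by (simp add: Sji_def cc_def) }
  moreover
  { assume h: "jj mod 3 = 1"
    hence "3 dvd (jj - 1)" "\<not> 3 dvd jj" using \<open>jj \<ge> 1\<close> by presburger+
    hence ?thesis using h by (simp add: Sji_def cc_def) }
  ultimately show ?thesis by auto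
qed

lemma P_mod3: "k < 3 * j \<Longrightarrow> 3 dvd (Pkj x k j - cc x k)"
proof -
  assume k: "k < 3 * j"
  have "[coeff (px x j ^ 3) k = (if 3 dvd k then coeff (px x j) (k div 3) ^ 3 else 0)] (mod 3)"
    by (rule cube_coeff_mod3)
  moreover have "(if 3 dvd k then coeff (px x j) (k div 3) ^ 3 else 0) = cc x k"
    using k by (auto simp: cc_def coeff_px)
  ultimately show ?thesis by (simp add: Pkj_coeff cong_iff_dvd_diff dvd_diff_commute)
qed

lemma S_scaled: "jj \<ge> 1 \<Longrightarrow> jj - 1 < 3 * i \<Longrightarrow>
   3^jj * Sji x jj i = 3^(jj - 1) * (Pkj x (jj - 1) i - cc x (jj - 1)) + 3^jj * cc x jj"
proof -
  assume h: "jj \<ge> 1" "jj - 1 < 3 * i"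
  obtain q where q: "Pkj x (jj - 1) i - cc x (jj - 1) = 3 * q" using P_mod3[OF h(2)] by (auto elim: dvdE)
  have e: "(3::int)^jj = 3^(jj-1) * 3" using h(1) by (cases jj) auto
  show ?thesis unfolding Sji_alt[OF h(1)] q e by (simp add: algebra_simps)
qed

lemma cube_split:
  fixes p M :: "int poly"
  shows "(p + M)^3 = p^3 + smult 3 (M * p^2) + smult 3 (M^2 * p) + M^3"
proof -
  have "poly ((p + M)^3) = poly (p^3 + smult 3 (M * p^2) + smult 3 (M^2 * p) + M^3)"
    by (rule ext) (simp add: algebra_simps power3_eq_cube power2_eq_square)
  thus ?thesis by (simp add: poly_eq_poly_eq_iff)
qed

lemma sq_split:
  fixes p M :: "int poly"
  shows "(p + M)^2 = p^2 + smult 2 (M * p) + M^2"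
proof -
  have "poly ((p + M)^2) = poly (p^2 + smult 2 (M * p) + M^2)"
    by (rule ext) (simp add: algebra_simps power2_eq_square)
  thus ?thesis by (simp add: poly_eq_poly_eq_iff)
qed

definition Cub :: "(nat \<Rightarrow> int) \<Rightarrow> nat \<Rightarrow> int" where
  "Cub x J = (\<Sum>n\<le>2*J. 3^n * coeff (px x (Suc J) ^ 3) n)"

lemma Cub_step:
  "Cub x (Suc J) = Cub x J + 3^(2*J+1) * Pkj x (2*J+1) (Suc J) + 3^(2*J+2) * Pkj x (2*J+2) (Suc J)
     + 3^(J+2) * x (Suc J) * (\<Sum>m\<le>Suc J. 3^m * coeff (px x (Suc J) ^ 2) m)
     + 3^(2*J+3) * x (Suc J)^2 * x 0"
proof -
  define j where "j = Suc J"
  define p where "p = px x j"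
  define M where "M = monom (x j) j"
  have pS: "px x (Suc j) = p + M" unfolding p_def M_def px_Suc ..
  have M2: "M^2 = monom (x j ^ 2) (j * 2)" unfolding M_def by (rule monom_power)
  have M3: "M^3 = monom (x j ^ 3) (j * 3)" unfolding M_def by (rule monom_power)
  have cf: "coeff (px x (Suc j) ^ 3) n = coeff (p^3) n + 3 * coeff (M * p^2) n + 3 * coeff (M^2 * p) n + coeff (M^3) n" for n
    unfolding pS cube_split coeff_add coeff_smult ..
  have "Cub x (Suc J) = (\<Sum>n\<le>2*j. 3^n * coeff (p^3) n) + (\<Sum>n\<le>2*j. 3^n * (3 * coeff (M * p^2) n))
      + (\<Sum>n\<le>2*j. 3^n * (3 * coeff (M^2 * p) n)) + (\<Sum>n\<le>2*j. 3^n * coeff (M^3) n)"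
    unfolding Cub_def j_def[symmetric] cf by (simp add: sum.distrib algebra_simps)
  also have "(\<Sum>n\<le>2*j. 3^n * coeff (M^3) n) = 0"
    unfolding M3 by (intro sum.neutral) (auto simp: coeff_monom j_def)
  also have "(\<Sum>n\<le>2*j. 3^n * coeff (p^3) n) = Cub x J + 3^(2*J+1) * Pkj x (2*J+1) (Suc J) + 3^(2*J+2) * Pkj x (2*J+2) (Suc J)"
  proof -
    have e: "2 * j = Suc (Suc (2 * J))" by (simp add: j_def)
    show ?thesis unfolding e Cub_def p_def j_def by (simp add: Pkj_coeff)
  qed
  also have "(\<Sum>n\<le>2*j. 3^n * (3 * coeff (M * p^2) n)) = (\<Sum>m\<le>j. 3^(m + j) * (3 * coeff (M * p^2) (m + j)))"
    using sum_shift0[of j "\<lambda>n. 3^n * (3 * coeff (M * p^2) n)" j]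
    by (simp add: M_def coeff_monom_mult mult_2)
  also have "\<dots> = 3^(J+2) * x (Suc J) * (\<Sum>m\<le>Suc J. 3^m * coeff (px x (Suc J) ^ 2) m)"
    unfolding sum_distrib_left
  proof (intro sum.cong)
    show "{..j} = {..Suc J}" by (simp add: j_def)
    fix m
    have c: "coeff (M * p^2) (m + j) = x j * coeff (p^2) m" by (simp add: M_def coeff_monom_mult)
    have e: "(3::int)^(m + j) * 3 = 3^(J+2) * 3^m" by (simp add: j_def power_add)
    have "3^(m + j) * (3 * coeff (M * p^2) (m + j)) = ((3::int)^(m + j) * 3) * x j * coeff (p^2) m"
      unfolding c by (simp add: algebra_simps)
    also have "\<dots> = 3^(J+2) * x j * (3^m * coeff (p^2) m)" unfolding e by (simp add: algebra_simps)
    finally show "3^(m + j) * (3 * coeff (M * p^2) (m + j)) = 3^(J+2) * x (Suc J) * (3^m * coeff (px x (Suc J) ^ 2) m)"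
      by (simp add: p_def j_def)
  qed
  also have "(\<Sum>n\<le>2*j. 3^n * (3 * coeff (M^2 * p) n)) = 3^(2*J+3) * x (Suc J)^2 * x 0"
  proof -
    have "(\<Sum>n\<le>2*j. 3^n * (3 * coeff (M^2 * p) n)) = (\<Sum>m\<le>0. 3^(m + 2*j) * (3 * coeff (M^2 * p) (m + 2*j)))"
    proof -
      have z: "coeff (M^2 * p) n = 0" if "n < 2*j" for n
        using that by (simp add: M2 coeff_monom_mult)
      show ?thesis using sum_shift0[of "2*j" "\<lambda>n. 3^n * (3 * coeff (M^2 * p) n)" 0] z by simp
    qed
    also have "\<dots> = 3^(2*J+3) * x (Suc J)^2 * x 0"
    proof -
      have c: "coeff (M^2 * p) (2*j) = x j ^ 2 * x 0"
        unfolding M2 coeff_monom_mult by (simp add: p_def coeff_px j_def)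
      have e: "(3::int)^(2*j) * 3 = 3^(2*J+3)" by (simp add: j_def power_add)
      have "(\<Sum>m\<le>0. 3^(m + 2*j) * (3 * coeff (M^2 * p) (m + 2*j))) = ((3::int)^(2*j) * 3) * coeff (M^2 * p) (2*j)"
        by simp
      also have "\<dots> = 3^(2*J+3) * (x j ^ 2 * x 0)" unfolding e c ..
      finally show ?thesis by (simp add: j_def)
    qed
    finally show ?thesis .
  qed
  finally show ?thesis by simp
qed

lemma Ablock:
  assumes hyp: "\<forall>k. [Aseq x a k = 0] (mod 3)"
  shows "3^(2*J+3) * ((Aseq x a (Suc J) - x 0 * x (Suc J)) * x (Suc J))
     = 3^(J+2) * x (Suc J) * (\<Sum>m\<le>Suc J. 3^m * coeff (px x (Suc J) ^ 2) m)
       + 3^(2*J+3) * x (Suc J)^2 * x 0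
       + (\<Sum>i\<le>Suc J. a i * x (Suc J) * 3^(i + Suc J + 1))"
proof -
  define j where "j = Suc J"
  define p where "p = px x j"
  define M where "M = monom (x j) j"
  have pS: "px x (Suc j) = p + M" unfolding p_def M_def px_Suc ..
  have M2: "M^2 = monom (x j ^ 2) (j * 2)" unfolding M_def by (rule monom_power)
  have W: "3^j * Aseq x a j = (\<Sum>k\<le>j. 3^k * Rk x k) + (\<Sum>k\<le>j. 3^k * a k)"
    unfolding W_lemma[OF hyp] by (simp add: sum.distrib algebra_simps)
  have R: "(\<Sum>k\<le>j. 3^k * Rk x k) = (\<Sum>k\<le>j. 3^k * coeff (p^2) k) + 3^j * (2 * (x j * x 0))"
  proof -
    have "(\<Sum>k\<le>j. 3^k * Rk x k) = (\<Sum>k\<le>j. 3^k * coeff (px x (Suc j) ^ 2) k)"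
      by (intro sum.cong refl) (simp add: Rk_coeff)
    also have "\<dots> = (\<Sum>k\<le>j. 3^k * coeff (p^2) k) + (\<Sum>k\<le>j. 3^k * (2 * coeff (M * p) k)) + (\<Sum>k\<le>j. 3^k * coeff (M^2) k)"
      unfolding pS sq_split coeff_add coeff_smult by (simp add: sum.distrib algebra_simps)
    also have "(\<Sum>k\<le>j. 3^k * coeff (M^2) k) = 0"
      unfolding M2 by (intro sum.neutral) (auto simp: coeff_monom j_def)
    also have "(\<Sum>k\<le>j. 3^k * (2 * coeff (M * p) k)) = 3^j * (2 * (x j * x 0))"
    proof -
      have z: "coeff (M * p) n = 0" if "n < j" for n
        using that by (simp add: M_def coeff_monom_mult)
      have "(\<Sum>k\<le>j + 0. 3^k * (2 * coeff (M * p) k)) = (\<Sum>m\<le>0. 3^(m + j) * (2 * coeff (M * p) (m + j)))"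
        using sum_shift0[of j "\<lambda>n. 3^n * (2 * coeff (M * p) n)" 0] z by simp
      also have "\<dots> = 3^j * (2 * (x j * x 0))"
        by (simp add: M_def coeff_monom_mult p_def coeff_px j_def)
      finally show ?thesis by simp
    qed
    finally show ?thesis by simp
  qed
  have aS: "(\<Sum>i\<le>j. a i * x j * 3^(i + j + 1)) = 3^(j+1) * x j * (\<Sum>k\<le>j. 3^k * a k)"
    unfolding sum_distrib_left by (intro sum.cong refl) (simp add: power_add algebra_simps)
  have e0: "2*J+3 = (j+1) + j" by (simp add: j_def)
  have e1: "(3::int)^(2*J+3) = 3^(j+1) * 3^j" by (simp only: e0 power_add)
  have e2: "(3::int)^(J+2) = 3^(j+1)" by (simp add: j_def)
  have "3^(2*J+3) * ((Aseq x a j - x 0 * x j) * x j) = 3^(j+1) * x j * (3^j * Aseq x a j) - 3^(2*J+3) * x j^2 * x 0"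
    unfolding e1 by (simp add: algebra_simps power2_eq_square)
  also have "\<dots> = 3^(j+1) * x j * (\<Sum>k\<le>j. 3^k * coeff (p^2) k) + 3^(2*J+3) * x j^2 * x 0
       + 3^(j+1) * x j * (\<Sum>k\<le>j. 3^k * a k)"
    unfolding W R e1 by (simp add: algebra_simps power2_eq_square)
  finally show ?thesis unfolding aS[symmetric] e2 by (simp add: p_def j_def)
qed

definition Apart :: "(nat \<Rightarrow> int) \<Rightarrow> (nat \<Rightarrow> int) \<Rightarrow> nat \<Rightarrow> int" where
  "Apart x a J = (\<Sum>l\<le>J. \<Sum>i\<le>2*J - l. a i * x l * 3^(i + l + 1))"

lemma Apart_step:
  "Apart x a (Suc J) = Apart x a J + (\<Sum>i\<le>Suc J. a i * x (Suc J) * 3^(i + Suc J + 1))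
     + 3^(2*J+2) * (\<Sum>t<Suc J. x (Suc J - 1 - t) * a (Suc J + t))
     + 3^(2*J+3) * (\<Sum>t<Suc J. x (Suc J - 1 - t) * a (Suc J + 1 + t))"
proof -
  define f where "f = (\<lambda>i l. a i * x l * 3^(i + l + 1))"
  have "Apart x a (Suc J) = (\<Sum>l\<le>J. \<Sum>i\<le>2*Suc J - l. f i l) + (\<Sum>i\<le>Suc J. f i (Suc J))"
    unfolding Apart_def f_def by simp
  also have "(\<Sum>l\<le>J. \<Sum>i\<le>2*Suc J - l. f i l) = (\<Sum>l\<le>J. (\<Sum>i\<le>2*J - l. f i l) + f (2*J+1-l) l + f (2*J+2-l) l)"
  proof (intro sum.cong refl)
    fix l assume "l \<in> {..J}"
    hence e: "2 * Suc J - l = Suc (Suc (2*J - l))" "Suc (2*J - l) = 2*J+1-l" "Suc (Suc (2*J - l)) = 2*J+2-l" "Suc (2*J+1-l) = 2*J+2-l" by auto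
    show "(\<Sum>i\<le>2*Suc J - l. f i l) = (\<Sum>i\<le>2*J - l. f i l) + f (2*J+1-l) l + f (2*J+2-l) l"
    proof -
      have "(\<Sum>i\<le>Suc (Suc (2*J - l)). f i l) = (\<Sum>i\<le>2*J - l. f i l) + f (Suc (2*J - l)) l + f (Suc (Suc (2*J - l))) l"
        by simp
      thus ?thesis by (simp only: e)
    qed
  qed
  also have "\<dots> = Apart x a J + (\<Sum>l\<le>J. f (2*J+1-l) l) + (\<Sum>l\<le>J. f (2*J+2-l) l)"
    unfolding Apart_def f_def by (simp add: sum.distrib)
  also have "(\<Sum>l\<le>J. f (2*J+1-l) l) = 3^(2*J+2) * (\<Sum>t<Suc J. x (Suc J - 1 - t) * a (Suc J + t))"
    unfolding sum_distrib_left
  proof (rule sum.reindex_bij_witness[of _ "\<lambda>t. J - t" "\<lambda>t. J - t"])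
    fix t assume t: "t \<in> {..<Suc J}"
    show "J - (J - t) = t" using t by auto
    show "J - t \<in> {..J}" by auto
  next
    fix l assume l: "l \<in> {..J}"
    show "J - (J - l) = l" using l by auto
    show "J - l \<in> {..<Suc J}" by auto
    have e: "Suc J - 1 - (J - l) = l" "Suc J + (J - l) = 2*J+1-l" "2*J+1-l + l + 1 = 2*J+2" using l by auto
    show "3^(2*J+2) * (x (Suc J - 1 - (J - l)) * a (Suc J + (J - l))) = f (2*J+1-l) l"
      unfolding f_def e(1,2) e(3) by (simp add: algebra_simps)
  qed
  also have "(\<Sum>l\<le>J. f (2*J+2-l) l) = 3^(2*J+3) * (\<Sum>t<Suc J. x (Suc J - 1 - t) * a (Suc J + 1 + t))"
    unfolding sum_distrib_left
  proof (rule sum.reindex_bij_witness[of _ "\<lambda>t. J - t" "\<lambda>t. J - t"])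
    fix t assume t: "t \<in> {..<Suc J}"
    show "J - (J - t) = t" using t by auto
    show "J - t \<in> {..J}" by auto
  next
    fix l assume l: "l \<in> {..J}"
    show "J - (J - l) = l" using l by auto
    show "J - l \<in> {..<Suc J}" by auto
    have e: "Suc J - 1 - (J - l) = l" "Suc J + 1 + (J - l) = 2*J+2-l" "2*J+2-l + l + 1 = 2*J+3" using l by auto
    show "3^(2*J+3) * (x (Suc J - 1 - (J - l)) * a (Suc J + 1 + (J - l))) = f (2*J+2-l) l"
      unfolding f_def e(1,2) e(3) by (simp add: algebra_simps)
  qed
  finally show ?thesis unfolding f_def by (simp add: algebra_simps)
qed

definition Lk :: "(nat \<Rightarrow> int) \<Rightarrow> (nat \<Rightarrow> int) \<Rightarrow> nat \<Rightarrow> int" where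
  "Lk x a k = (if k = 0 then x 0 ^ 3 else if k = 1 then x 0 * a 0
      else if even k then Leven x a (k div 2) 0 else Lodd x a (k div 2) 0)"

definition Phi :: "(nat \<Rightarrow> int) \<Rightarrow> (nat \<Rightarrow> int) \<Rightarrow> nat \<Rightarrow> int" where
  "Phi x a K = (\<Sum>k<K. Lk x a k * 3^k)"

definition Psi :: "(nat \<Rightarrow> int) \<Rightarrow> (nat \<Rightarrow> int) \<Rightarrow> nat \<Rightarrow> int" where
  "Psi x a J = Cub x J + Apart x a J + 3^(2*J+1) * cc x (2*J+1)"

lemma Lk_even: "Lk x a (2*J+2) = (\<Sum>t<Suc J. x (Suc J - 1 - t) * a (Suc J + t)) + Sji x (2 * Suc J) (Suc J)"
proof -
  have "(2*J+2) div 2 = Suc J" by simp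
  thus ?thesis by (simp add: Lk_def Leven_def)
qed

lemma Lk_odd: "Lk x a (2*J+3) = (Aseq x a (Suc J) - x 0 * x (Suc J)) * x (Suc J)
   + (\<Sum>t<Suc J. x (Suc J - 1 - t) * a (Suc J + 1 + t)) + Sji x (2 * Suc J + 1) (Suc J)"
proof -
  have "(2*J+3) div 2 = Suc J" by simp
  moreover have "\<not> even (2*J+3)" by simp
  ultimately show ?thesis by (simp add: Lk_def Lodd_def)
qed

lemma Phi_Psi:
  assumes hyp: "\<forall>k. [Aseq x a k = 0] (mod 3)"
  shows "Phi x a (2*J+2) = Psi x a J"
proof (induction J)
  case 0
  have c: "coeff (px x (Suc 0) ^ 3) 0 = x 0 ^ 3" by (simp add: coeff_0_power coeff_px)
  show ?case
    by (simp add: Phi_def Psi_def Cub_def Apart_def Lk_def c cc_def numeral_2_eq_2)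
next
  case (Suc J)
  have ph: "Phi x a (2 * Suc J + 2) = Phi x a (2*J+2) + Lk x a (2*J+2) * 3^(2*J+2) + Lk x a (2*J+3) * 3^(2*J+3)"
  proof -
    have e: "2 * Suc J + 2 = Suc (Suc (2*J+2))" by simp
    show ?thesis unfolding e Phi_def by (simp add: numeral_3_eq_3)
  qed
  have S1: "3^(2*J+2) * Sji x (2 * Suc J) (Suc J) = 3^(2*J+1) * (Pkj x (2*J+1) (Suc J) - cc x (2*J+1)) + 3^(2*J+2) * cc x (2*J+2)"
    using S_scaled[of "2 * Suc J" "Suc J" x] by simp
  have S2: "3^(2*J+3) * Sji x (2 * Suc J + 1) (Suc J) = 3^(2*J+2) * (Pkj x (2*J+2) (Suc J) - cc x (2*J+2)) + 3^(2*J+3) * cc x (2*J+3)"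
    using S_scaled[of "2 * Suc J + 1" "Suc J" x] by (simp add: numeral_3_eq_3)
  have ps: "Psi x a (Suc J) = Cub x (Suc J) + Apart x a (Suc J) + 3^(2*J+3) * cc x (2*J+3)"
    unfolding Psi_def by (simp add: numeral_3_eq_3)
  show ?case
    unfolding ph Suc.IH ps Cub_step Apart_step Lk_even Lk_odd
    using S1 S2 Ablock[OF hyp, of J] unfolding Psi_def
    by (simp add: algebra_simps)
qed

lemma sum_split_lt:
  fixes f :: "nat \<Rightarrow> int"
  assumes "m \<le> N"
  shows "(\<Sum>n<N. f n) = (\<Sum>n<m. f n) + (\<Sum>n\<in>{m..<N}. f n)"
proof -
  have e: "{..<N} = {..<m} \<union> {m..<N}" using assms by auto
  have "sum f ({..<m} \<union> {m..<N}) = sum f {..<m} + sum f {m..<N}" by (rule sum.union_disjoint) auto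
  thus ?thesis unfolding e .
qed

lemma pow3_dvd: "m \<le> n \<Longrightarrow> (3::int)^m dvd 3^n * c"
  by (simp add: le_imp_power_dvd)

definition Tt :: "(nat \<Rightarrow> int) \<Rightarrow> (nat \<Rightarrow> int) \<Rightarrow> nat \<Rightarrow> int" where
  "Tt x a N = trunc3 x N ^ 3 + (3 * trunc3 a N) * trunc3 x N"

lemma trunc3_Suc: "trunc3 x (Suc n) = trunc3 x n + 3^n * x n"
  unfolding trunc3_def by (simp add: algebra_simps)

lemma Tt_step: "[Tt x a (Suc n) = Tt x a n] (mod 3^n)"
proof -
  define X where "X = trunc3 x n"
  define al where "al = trunc3 a n"
  define d where "d = 3^n * x n"
  have "Tt x a (Suc n) - Tt x a n = 3^n * (x n * (3 * X^2 + 3 * X * d + d^2) + 3 * (a n * (X + d) + al * x n))"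
    unfolding Tt_def trunc3_Suc X_def[symmetric] al_def[symmetric] d_def[symmetric]
    unfolding d_def by (simp add: algebra_simps power2_eq_square power3_eq_cube)
  thus ?thesis by (simp add: cong_iff_dvd_diff)
qed

lemma cube_part:
  "[Cub x J + 3^(2*J+1) * cc x (2*J+1) = trunc3 x (Suc J) ^ 3] (mod 3^(2*J+2))"
proof -
  define q where "q = px x (Suc J) ^ 3"
  have dq: "degree q < 3*J+2"
  proof -
    have "degree q \<le> degree (px x (Suc J)) * 3" unfolding q_def by (rule degree_power_le)
    moreover have "degree (px x (Suc J)) \<le> J" by (rule degree_le) (auto simp: coeff_px)
    ultimately show ?thesis by linarith
  qed
  have "trunc3 x (Suc J) ^ 3 = poly q 3" unfolding q_def by (simp add: poly_px)
  also have "\<dots> = (\<Sum>n<3*J+2. coeff q n * 3^n)" by (rule poly_sum_lt[OF dq])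
  also have "\<dots> = (\<Sum>n<2*J+2. coeff q n * 3^n) + (\<Sum>n\<in>{2*J+2..<3*J+2}. coeff q n * 3^n)"
    by (rule sum_split_lt) simp
  also have "(\<Sum>n<2*J+2. coeff q n * 3^n) = Cub x J + 3^(2*J+1) * coeff q (2*J+1)"
  proof -
    have e: "2*J+2 = Suc (2*J+1)" by simp
    show ?thesis unfolding e sum.lessThan_Suc Cub_def q_def
      by (simp add: lessThan_Suc_atMost mult.commute)
  qed
  finally have E: "trunc3 x (Suc J) ^ 3 = Cub x J + 3^(2*J+1) * coeff q (2*J+1) + (\<Sum>n\<in>{2*J+2..<3*J+2}. coeff q n * 3^n)" .
  have d1: "(3::int)^(2*J+2) dvd (\<Sum>n\<in>{2*J+2..<3*J+2}. coeff q n * 3^n)"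
  proof (intro dvd_sum)
    fix n assume "n \<in> {2*J+2..<3*J+2}"
    hence "2*J+2 \<le> n" by simp
    from pow3_dvd[OF this, of "coeff q n"] show "(3::int)^(2*J+2) dvd coeff q n * 3^n"
      by (simp only: mult.commute)
  qed
  have "3 dvd (coeff q (2*J+1) - cc x (2*J+1))"
    using P_mod3[of "2*J+1" "Suc J" x] by (simp add: Pkj_coeff q_def)
  then obtain r where r: "coeff q (2*J+1) - cc x (2*J+1) = 3 * r" by (auto elim: dvdE)
  have d2: "(3::int)^(2*J+2) dvd 3^(2*J+1) * (coeff q (2*J+1) - cc x (2*J+1))"
    unfolding r by simp
  have "trunc3 x (Suc J) ^ 3 - (Cub x J + 3^(2*J+1) * cc x (2*J+1))
     = 3^(2*J+1) * (coeff q (2*J+1) - cc x (2*J+1)) + (\<Sum>n\<in>{2*J+2..<3*J+2}. coeff q n * 3^n)"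
    unfolding E by (simp add: algebra_simps)
  hence "(3::int)^(2*J+2) dvd trunc3 x (Suc J) ^ 3 - (Cub x J + 3^(2*J+1) * cc x (2*J+1))"
    using d1 d2 by simp
  thus ?thesis by (simp add: cong_iff_dvd_diff dvd_diff_commute)
qed

lemma trunc_prod:
  "3 * trunc3 a N * trunc3 x M = (\<Sum>l<M. \<Sum>i<N. a i * x l * 3^(i + l + 1))"
proof -
  have p: "trunc3 a N * trunc3 x M = (\<Sum>i<N. \<Sum>l<M. (a i * 3^i) * (x l * 3^l))"
    unfolding trunc3_def by (rule sum_product)
  have "3 * trunc3 a N * trunc3 x M = 3 * (\<Sum>i<N. \<Sum>l<M. (a i * 3^i) * (x l * 3^l))"
    unfolding p[symmetric] by simp
  also have "\<dots> = (\<Sum>i<N. \<Sum>l<M. a i * x l * 3^(i + l + 1))"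
    unfolding sum_distrib_left by (intro sum.cong refl) (simp add: power_add algebra_simps)
  also have "\<dots> = (\<Sum>l<M. \<Sum>i<N. a i * x l * 3^(i + l + 1))" by (rule sum.swap)
  finally show ?thesis .
qed

lemma apart_part:
  "[Apart x a J = 3 * trunc3 a (2*J+1) * trunc3 x (Suc J)] (mod 3^(2*J+2))"
proof -
  define f where "f = (\<lambda>i l. a i * x l * 3^(i + l + 1))"
  have "3 * trunc3 a (2*J+1) * trunc3 x (Suc J) - Apart x a J
      = (\<Sum>l\<le>J. (\<Sum>i<2*J+1. f i l) - (\<Sum>i\<le>2*J - l. f i l))"
    unfolding trunc_prod Apart_def f_def lessThan_Suc_atMost sum_subtractf ..
  also have "\<dots> = (\<Sum>l\<le>J. \<Sum>i\<in>{..<2*J+1} - {..2*J - l}. f i l)"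
    by (intro sum.cong refl, subst sum_diff) auto
  finally have E: "3 * trunc3 a (2*J+1) * trunc3 x (Suc J) - Apart x a J = (\<Sum>l\<le>J. \<Sum>i\<in>{..<2*J+1} - {..2*J - l}. f i l)" .
  have "(3::int)^(2*J+2) dvd (\<Sum>l\<le>J. \<Sum>i\<in>{..<2*J+1} - {..2*J - l}. f i l)"
  proof (intro dvd_sum)
    fix l i assume l: "l \<in> {..J}" and i: "i \<in> {..<2*J+1} - {..2*J - l}"
    hence "2*J+2 \<le> i + l + 1" by auto
    from pow3_dvd[OF this, of "a i * x l"] show "(3::int)^(2*J+2) dvd f i l"
      unfolding f_def by (simp only: mult.commute)
  qed
  thus ?thesis unfolding E[symmetric] by (simp add: cong_iff_dvd_diff dvd_diff_commute)
qed

lemma H_lemma: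
  assumes hyp: "\<forall>k. [Aseq x a k = 0] (mod 3)"
  shows "(3::int)^(Suc J) dvd trunc3 x (Suc J) ^ 2 + trunc3 a (2*J+1)"
proof -
  define q where "q = px x (Suc J) ^ 2"
  have dq: "degree q < 2*J+2"
  proof -
    have "degree q \<le> degree (px x (Suc J)) * 2" unfolding q_def by (rule degree_power_le)
    moreover have "degree (px x (Suc J)) \<le> J" by (rule degree_le) (auto simp: coeff_px)
    ultimately show ?thesis by linarith
  qed
  have "trunc3 x (Suc J) ^ 2 = poly q 3" unfolding q_def by (simp add: poly_px)
  also have "\<dots> = (\<Sum>n<2*J+2. coeff q n * 3^n)" by (rule poly_sum_lt[OF dq])
  also have "\<dots> = (\<Sum>n<Suc J. coeff q n * 3^n) + (\<Sum>n\<in>{Suc J..<2*J+2}. coeff q n * 3^n)"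
    by (rule sum_split_lt) simp
  also have "(\<Sum>n<Suc J. coeff q n * 3^n) = (\<Sum>k\<le>J. 3^k * Rk x k)"
    unfolding lessThan_Suc_atMost q_def
  proof (intro sum.cong refl)
    fix k assume "k \<in> {..J}"
    thus "coeff (px x (Suc J) ^ 2) k * 3^k = 3^k * Rk x k"
      using Rk_coeff[of k "Suc J" x] by simp
  qed
  finally have E1: "trunc3 x (Suc J) ^ 2 = (\<Sum>k\<le>J. 3^k * Rk x k) + (\<Sum>n\<in>{Suc J..<2*J+2}. coeff q n * 3^n)" .
  have "trunc3 a (2*J+1) = (\<Sum>n<Suc J. a n * 3^n) + (\<Sum>n\<in>{Suc J..<2*J+1}. a n * 3^n)"
    unfolding trunc3_def by (rule sum_split_lt) simp
  hence E2: "trunc3 a (2*J+1) = (\<Sum>k\<le>J. 3^k * a k) + (\<Sum>n\<in>{Suc J..<2*J+1}. a n * 3^n)"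
    by (simp add: lessThan_Suc_atMost mult.commute)
  have W: "3^J * Aseq x a J = (\<Sum>k\<le>J. 3^k * Rk x k) + (\<Sum>k\<le>J. 3^k * a k)"
    unfolding W_lemma[OF hyp] by (simp add: sum.distrib algebra_simps)
  obtain c where c: "Aseq x a J = 3 * c" using hyp by (auto simp: cong_0_iff elim: dvdE)
  have d0: "(3::int)^(Suc J) dvd 3^J * Aseq x a J" unfolding c by simp
  have d1: "(3::int)^(Suc J) dvd (\<Sum>n\<in>{Suc J..<2*J+2}. coeff q n * 3^n)"
  proof (intro dvd_sum)
    fix n assume "n \<in> {Suc J..<2*J+2}"
    hence "Suc J \<le> n" by simp
    from pow3_dvd[OF this, of "coeff q n"] show "(3::int)^(Suc J) dvd coeff q n * 3^n"
      by (simp only: mult.commute)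
  qed
  have d2: "(3::int)^(Suc J) dvd (\<Sum>n\<in>{Suc J..<2*J+1}. a n * 3^n)"
  proof (intro dvd_sum)
    fix n assume "n \<in> {Suc J..<2*J+1}"
    hence "Suc J \<le> n" by simp
    from pow3_dvd[OF this, of "a n"] show "(3::int)^(Suc J) dvd a n * 3^n"
      by (simp only: mult.commute)
  qed
  have "trunc3 x (Suc J) ^ 2 + trunc3 a (2*J+1) = 3^J * Aseq x a J
     + (\<Sum>n\<in>{Suc J..<2*J+2}. coeff q n * 3^n) + (\<Sum>n\<in>{Suc J..<2*J+1}. a n * 3^n)"
    unfolding E1 E2 W by simp
  thus ?thesis using d0 d1 d2 by simp
qed

lemma Psi_T:
  assumes hyp: "\<forall>k. [Aseq x a k = 0] (mod 3)"
  shows "[Psi x a J = Tt x a (2*J+2)] (mod 3^(2*J+2))"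
proof -
  define X where "X = trunc3 x (Suc J)"
  define al where "al = trunc3 a (2*J+1)"
  define Y where "Y = (\<Sum>n\<in>{Suc J..<2*J+2}. x n * 3^n)"
  define e where "e = 3^(2*J+1) * a (2*J+1)"
  have Xb: "trunc3 x (2*J+2) = X + Y"
    unfolding X_def Y_def trunc3_def by (rule sum_split_lt) simp
  have alb: "trunc3 a (2*J+2) = al + e"
    using trunc3_Suc[of a "2*J+1"] by (simp add: al_def e_def)
  have "(3::int)^(Suc J) dvd Y"
    unfolding Y_def
  proof (intro dvd_sum)
    fix n assume "n \<in> {Suc J..<2*J+2}"
    hence "Suc J \<le> n" by simp
    from pow3_dvd[OF this, of "x n"] show "(3::int)^(Suc J) dvd x n * 3^n"
      by (simp only: mult.commute)
  qed
  then obtain y where y: "Y = 3^(Suc J) * y" by (auto elim: dvdE)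
  obtain h where h: "X^2 + al = 3^(Suc J) * h"
    using H_lemma[OF hyp, of J] unfolding X_def al_def by (auto elim: dvdE)
  have "Tt x a (2*J+2) - (X^3 + 3 * al * X) = 3*Y*(X^2 + al) + 3*X*Y^2 + Y^3 + 3*e*(X+Y)"
    unfolding Tt_def Xb alb by (simp add: algebra_simps power2_eq_square power3_eq_cube)
  also have "\<dots> = 3^(2*J+2) * (3*y*h + 3*X*y^2 + 3^(J+1)*y^3 + a (2*J+1)*(X+Y))"
  proof -
    have p1: "(3::int) * 3^(Suc J) * 3^(Suc J) = 3^(2*J+2) * 3" by (simp add: power_add[symmetric])
    have p2: "((3::int)^(Suc J))^3 = 3^(2*J+2) * 3^(J+1)" by (simp add: power_add[symmetric] power_mult[symmetric])
    have p3: "(3::int) * 3^(2*J+1) = 3^(2*J+2)" by simp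
    have "3*Y*(X^2 + al) + 3*X*Y^2 + Y^3 + 3*e*(X+Y)
       = (3 * 3^(Suc J) * 3^(Suc J)) * y * h + (3 * 3^(Suc J) * 3^(Suc J)) * X * y^2 + (3^(Suc J))^3 * y^3
         + (3 * 3^(2*J+1)) * a (2*J+1) * (X+Y)"
      unfolding y h e_def by (simp add: algebra_simps power2_eq_square power3_eq_cube)
    also have "\<dots> = 3^(2*J+2) * (3*y*h + 3*X*y^2 + 3^(J+1)*y^3 + a (2*J+1)*(X+Y))"
      unfolding p1 p2 p3 by (simp add: algebra_simps)
    finally show ?thesis .
  qed
  finally have "[X^3 + 3 * al * X = Tt x a (2*J+2)] (mod 3^(2*J+2))"
    by (simp add: cong_iff_dvd_diff dvd_diff_commute)
  moreover have "[Psi x a J = X^3 + 3 * al * X] (mod 3^(2*J+2))"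
  proof -
    have "[Psi x a J = (Cub x J + 3^(2*J+1) * cc x (2*J+1)) + Apart x a J] (mod 3^(2*J+2))"
      unfolding Psi_def by (simp add: algebra_simps)
    also have "[(Cub x J + 3^(2*J+1) * cc x (2*J+1)) + Apart x a J = X^3 + 3 * al * X] (mod 3^(2*J+2))"
      unfolding X_def al_def by (intro cong_add cube_part apart_part)
    finally show ?thesis .
  qed
  ultimately show ?thesis using cong_trans by blast
qed

lemma main_cong:
  assumes hyp: "\<forall>k. [Aseq x a k = 0] (mod 3)"
  shows "[Phi x a K = Tt x a K] (mod 3^K)"
proof -
  have even_case: "[Phi x a (2*J+2) = Tt x a (2*J+2)] (mod 3^(2*J+2))" for J
    using Phi_Psi[OF hyp, of J] Psi_T[OF hyp, of J] by simp
  consider "K = 0" | J where "K = 2*J+2" | J where "K = 2*J+1"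
  proof -
    have "K = 0 \<or> (\<exists>J. K = 2*J+2) \<or> (\<exists>J. K = 2*J+1)" by presburger
    thus "(K = 0 \<Longrightarrow> thesis) \<Longrightarrow> (\<And>J. K = 2*J+2 \<Longrightarrow> thesis) \<Longrightarrow> (\<And>J. K = 2*J+1 \<Longrightarrow> thesis) \<Longrightarrow> thesis"
      by blast
  qed
  thus ?thesis
  proof cases
    case 1 thus ?thesis by simp
  next
    case (2 J) thus ?thesis using even_case by simp
  next
    case (3 J)
    have ph: "Phi x a (2*J+2) = Phi x a (2*J+1) + Lk x a (2*J+1) * 3^(2*J+1)"
      unfolding Phi_def by simp
    have d: "(3::int)^(2*J+1) dvd 3^(2*J+2)" by (rule le_imp_power_dvd) simp
    have c1: "[Phi x a (2*J+2) = Tt x a (2*J+2)] (mod 3^(2*J+1))"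
      using cong_dvd_modulus[OF even_case d] .
    have c2: "[Phi x a (2*J+1) = Phi x a (2*J+2)] (mod 3^(2*J+1))"
      unfolding ph by (simp add: cong_iff_dvd_diff)
    have c3: "[Tt x a (2*J+2) = Tt x a (2*J+1)] (mod 3^(2*J+1))"
      using Tt_step[of x a "2*J+1"] by simp
    show ?thesis using 3 cong_trans[OF cong_trans[OF c2 c1] c3] by simp
  qed
qed

lemma Leven_m: "Leven x a j m = Leven x a j 0 + m" by (simp add: Leven_def)
lemma Lodd_m: "Lodd x a j m = Lodd x a j 0 + m" by (simp add: Lodd_def)

lemma Mk_0: "Mk x a b 0 = 0" by (simp add: Mk_def)

lemma Mk_rec: "Mk x a b (Suc k) = (Lk x a k + Mk x a b k - b k) div 3"
proof -
  have "k = 0 \<or> k = 1 \<or> (\<exists>n. k = 2 * Suc n) \<or> (\<exists>n. k = 2 * Suc n + 1)" by presburger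
  moreover
  { assume "k = 0" hence ?thesis by (simp add: Mk_def Lk_def Let_def) }
  moreover
  { assume k: "k = 1"
    have "Mk x a b (Suc k) = snd (Mpair x a b 0)" using k by (simp add: Mk_def)
    moreover have "Mk x a b k = fst (Mpair x a b 0)" using k by (simp add: Mk_def)
    ultimately have ?thesis using k by (simp add: Lk_def Let_def) }
  moreover
  { fix n assume k: "k = 2 * Suc n"
    have "Mk x a b (Suc k) = fst (Mpair x a b (Suc n))" using k by (simp add: Mk_def)
    moreover have "Mk x a b k = snd (Mpair x a b n)" using k by (simp add: Mk_def)
    moreover have "Lk x a k = Leven x a (Suc n) 0" using k by (simp add: Lk_def)
    ultimately have ?thesis using k by (simp add: Let_def Leven_m[of x a "Suc n" "snd (Mpair x a b n)"]) }
  moreover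
  { fix n assume k: "k = 2 * Suc n + 1"
    have e1: "Suc k div 2 - 1 = Suc n" using k by simp
    have m1: "Mk x a b (Suc k) = snd (Mpair x a b (Suc n))" using k e1 by (simp add: Mk_def)
    have m2: "Mk x a b k = fst (Mpair x a b (Suc n))" using k by (simp add: Mk_def)
    have l: "Lk x a k = Lodd x a (Suc n) 0" using k by (simp add: Lk_def)
    have sn: "snd (Mpair x a b (Suc n)) = (Lodd x a (Suc n) (fst (Mpair x a b (Suc n))) - b (2 * Suc n + 1)) div 3"
      by (simp add: Let_def)
    have ?thesis unfolding m1 m2 l sn unfolding k
      by (subst Lodd_m) (rule refl) }
  ultimately show ?thesis by blast
qed

lemma carry:
  "((\<forall>k<K. [Lk x a k + Mk x a b k = b k] (mod 3)) \<longleftrightarrow> (3::int)^K dvd (Phi x a K - trunc3 b K))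
   \<and> ((\<forall>k<K. [Lk x a k + Mk x a b k = b k] (mod 3)) \<longrightarrow> Phi x a K - trunc3 b K = 3^K * Mk x a b K)"
proof (induction K)
  case 0 show ?case by (simp add: Phi_def trunc3_def Mk_0)
next
  case (Suc K)
  define Q where "Q = Phi x a K - trunc3 b K"
  define v where "v = Lk x a K + Mk x a b K - b K"
  have QS: "Phi x a (Suc K) - trunc3 b (Suc K) = Q + 3^K * (Lk x a K - b K)"
    unfolding Q_def Phi_def trunc3_Suc by (simp add: algebra_simps)
  have ck: "[Lk x a K + Mk x a b K = b K] (mod 3) \<longleftrightarrow> 3 dvd v"
    unfolding v_def by (simp add: cong_iff_dvd_diff)
  have all: "(\<forall>k<Suc K. [Lk x a k + Mk x a b k = b k] (mod 3)) \<longleftrightarrow>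
      (\<forall>k<K. [Lk x a k + Mk x a b k = b k] (mod 3)) \<and> [Lk x a K + Mk x a b K = b K] (mod 3)"
    by (auto simp: less_Suc_eq)
  show ?case
  proof (cases "\<forall>k<K. [Lk x a k + Mk x a b k = b k] (mod 3)")
    case True
    hence Qv: "Q = 3^K * Mk x a b K" using Suc.IH unfolding Q_def by blast
    have QS2: "Phi x a (Suc K) - trunc3 b (Suc K) = 3^K * v"
      unfolding QS Qv v_def by (simp add: algebra_simps)
    have dv: "(3::int)^Suc K dvd 3^K * v \<longleftrightarrow> 3 dvd v"
      by (simp add: mult.commute[of 3])
    have mk: "Mk x a b (Suc K) = v div 3" unfolding Mk_rec v_def ..
    show ?thesis
      unfolding all QS2 ck dv using True mk by auto
  next
    case False
    hence nd: "\<not> (3::int)^K dvd Q" using Suc.IH unfolding Q_def by blast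
    have "\<not> (3::int)^Suc K dvd Phi x a (Suc K) - trunc3 b (Suc K)"
    proof
      assume "(3::int)^Suc K dvd Phi x a (Suc K) - trunc3 b (Suc K)"
      hence "(3::int)^K dvd Q + 3^K * (Lk x a K - b K)" unfolding QS
        by (metis dvd_mult_right power_Suc)
      hence "(3::int)^K dvd Q" by (simp add: dvd_add_left_iff)
      with nd show False ..
    qed
    thus ?thesis unfolding all using False by blast
  qed
qed

lemma conds_iff:
  "([x 0 ^ 3 = b 0] (mod 3) \<and>
     [x 0 * a 0 + Mk x a b 1 = b 1] (mod 3) \<and>
     (\<forall>j\<ge>1. [Leven x a j (Mk x a b (2 * j)) = b (2 * j)] (mod 3) \<and>
             [Lodd x a j (Mk x a b (2 * j + 1)) = b (2 * j + 1)] (mod 3)))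
   \<longleftrightarrow> (\<forall>k. [Lk x a k + Mk x a b k = b k] (mod 3))"
proof -
  have ev: "Lk x a (2*j) + Mk x a b (2*j) = Leven x a j (Mk x a b (2 * j))" if "j \<ge> 1" for j
    using that by (simp add: Lk_def Leven_m[of x a j "Mk x a b (2*j)"])
  have od: "Lk x a (2*j+1) + Mk x a b (2*j+1) = Lodd x a j (Mk x a b (2 * j + 1))" if "j \<ge> 1" for j
    using that by (simp add: Lk_def Lodd_m[of x a j "Mk x a b (Suc (2*j))"])
  show ?thesis
  proof
    assume h: "[x 0 ^ 3 = b 0] (mod 3) \<and>
     [x 0 * a 0 + Mk x a b 1 = b 1] (mod 3) \<and>
     (\<forall>j\<ge>1. [Leven x a j (Mk x a b (2 * j)) = b (2 * j)] (mod 3) \<and>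
             [Lodd x a j (Mk x a b (2 * j + 1)) = b (2 * j + 1)] (mod 3))"
    show "\<forall>k. [Lk x a k + Mk x a b k = b k] (mod 3)"
    proof
      fix k :: nat
      have "k = 0 \<or> k = 1 \<or> (\<exists>j\<ge>1. k = 2*j) \<or> (\<exists>j\<ge>1. k = 2*j+1)" by presburger
      thus "[Lk x a k + Mk x a b k = b k] (mod 3)"
        using h ev od by (auto simp: Lk_def Mk_0)
    qed
  next
    assume h: "\<forall>k. [Lk x a k + Mk x a b k = b k] (mod 3)"
    have "[x 0 ^ 3 = b 0] (mod 3)" using h[rule_format, of 0] by (simp add: Lk_def Mk_0)
    moreover have "[x 0 * a 0 + Mk x a b 1 = b 1] (mod 3)" using h[rule_format, of 1] by (simp add: Lk_def)
    moreover have "\<forall>j\<ge>1. [Leven x a j (Mk x a b (2 * j)) = b (2 * j)] (mod 3) \<and>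
             [Lodd x a j (Mk x a b (2 * j + 1)) = b (2 * j + 1)] (mod 3)"
      using h ev od by metis
    ultimately show "[x 0 ^ 3 = b 0] (mod 3) \<and>
     [x 0 * a 0 + Mk x a b 1 = b 1] (mod 3) \<and>
     (\<forall>j\<ge>1. [Leven x a j (Mk x a b (2 * j)) = b (2 * j)] (mod 3) \<and>
             [Lodd x a j (Mk x a b (2 * j + 1)) = b (2 * j + 1)] (mod 3))" by blast
  qed
qed

theorem theorem3p9:
  fixes x a b :: "nat \<Rightarrow> int"
  assumes "digits3 a" and "a 0 \<noteq> 0"
    and "digits3 b" and "b 0 \<noteq> 0"
    and "digits3 x" and "x 0 \<noteq> 0"
    and "\<forall>k. [Aseq x a k = 0] (mod 3)"
  shows "is_solution x a b \<longleftrightarrow>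
    ([x 0 ^ 3 = b 0] (mod 3) \<and>
     [x 0 * a 0 + Mk x a b 1 = b 1] (mod 3) \<and>
     (\<forall>j\<ge>1. [Leven x a j (Mk x a b (2 * j)) = b (2 * j)] (mod 3) \<and>
             [Lodd x a j (Mk x a b (2 * j + 1)) = b (2 * j + 1)] (mod 3)))"
proof -
  have hyp: "\<forall>k. [Aseq x a k = 0] (mod 3)" by fact
  have "is_solution x a b \<longleftrightarrow> (\<forall>N. [Tt x a N = trunc3 b N] (mod 3^N))"
    unfolding is_solution_def Tt_def ..
  also have "\<dots> \<longleftrightarrow> (\<forall>N. [Phi x a N = trunc3 b N] (mod 3^N))"
  proof -
    have "[Tt x a N = trunc3 b N] (mod 3^N) \<longleftrightarrow> [Phi x a N = trunc3 b N] (mod 3^N)" for N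
      using main_cong[OF hyp, of N] by (meson cong_sym cong_trans)
    thus ?thesis by simp
  qed
  also have "\<dots> \<longleftrightarrow> (\<forall>N. (3::int)^N dvd (Phi x a N - trunc3 b N))"
    by (simp add: cong_iff_dvd_diff)
  also have "\<dots> \<longleftrightarrow> (\<forall>N. \<forall>k<N. [Lk x a k + Mk x a b k = b k] (mod 3))"
    using carry by blast
  also have "\<dots> \<longleftrightarrow> (\<forall>k. [Lk x a k + Mk x a b k = b k] (mod 3))"
    by (meson lessI)
  finally show ?thesis using conds_iff by blast
qed

end
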